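(* Let $K\subseteq\mathbb{C}$ be a number field of class number $1$ stable under complex conjugation, with ring of integers $\mathcal{O}_K$, and let $K_0:=K\cap\mathbb{R}$, $\mathcal{O}_{K_0}:=K_0\cap\mathcal{O}_K$. Suppose $a,b\in\mathcal{O}_{K_0}$ satisfy $a\mid b$ and $a=\alpha\overline{\alpha}$, $b=\beta\overline{\beta}$ for some $\alpha,\beta\in\mathcal{O}_K$. Then there exists $\alpha_1\in\mathcal{O}_K$ dividing $\beta$ such that $\alpha_1\overline{\alpha_1}=\alpha\overline{\alpha}$. In particular $b/a=\gamma\overline{\gamma}$ with $\gamma=\beta/\alpha_1\in\mathcal{O}_K$. *)

theory Defs
  imports Complex_Main "HOL-Computational_Algebra.Polynomial"
begin

definition subfield_of_complex :: "complex set \<Rightarrow> bool" where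
  "subfield_of_complex K \<longleftrightarrow> 0 \<in> K \<and> 1 \<in> K \<and>
     (\<forall>x\<in>K. \<forall>y\<in>K. x + y \<in> K \<and> x - y \<in> K \<and> x * y \<in> K) \<and>
     (\<forall>x\<in>K. x \<noteq> 0 \<longrightarrow> inverse x \<in> K)"

definition number_field :: "complex set \<Rightarrow> bool" where
  "number_field K \<longleftrightarrow> subfield_of_complex K \<and>
     (\<exists>B. finite B \<and> B \<subseteq> K \<and>
        (\<forall>x\<in>K. \<exists>c :: complex \<Rightarrow> rat. x = (\<Sum>b\<in>B. of_rat (c b) * b)))"

definition ring_of_integers :: "complex set \<Rightarrow> complex set" where
  "ring_of_integers K = {x \<in> K. algebraic_int x}"

definition dvd_in :: "complex set \<Rightarrow> complex \<Rightarrow> complex \<Rightarrow> bool" where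
  "dvd_in R x y \<longleftrightarrow> (\<exists>c\<in>R. y = x * c)"

definition ideal_in :: "complex set \<Rightarrow> complex set \<Rightarrow> bool" where
  "ideal_in R I \<longleftrightarrow> I \<subseteq> R \<and> 0 \<in> I \<and>
     (\<forall>x\<in>I. \<forall>y\<in>I. x + y \<in> I) \<and> (\<forall>r\<in>R. \<forall>x\<in>I. r * x \<in> I)"

definition class_number_one :: "complex set \<Rightarrow> bool" where
  "class_number_one K \<longleftrightarrow>
     (\<forall>I. ideal_in (ring_of_integers K) I \<longrightarrow>
        (\<exists>g\<in>ring_of_integers K. I = {g * r | r. r \<in> ring_of_integers K}))"

end

theory Submission imports Defs "Jordan_Normal_Form.Char_Poly" begin

definition zspan :: "complex set \<Rightarrow> complex set" where
  "zspan G = {(\<Sum>g\<in>G. of_int (c g) * g) | c. True}"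

lemma crit_list:
  fixes x :: complex and gs :: "complex list" and c :: "nat \<Rightarrow> nat \<Rightarrow> int"
  assumes nz: "\<exists>i<length gs. gs ! i \<noteq> 0"
    and rel: "\<And>i. i < length gs \<Longrightarrow> x * gs ! i = (\<Sum>j<length gs. of_int (c i j) * gs ! j)"
  shows "algebraic_int x"
proof -
  define n where "n = length gs"
  define Ai :: "int mat" where "Ai = mat n n (\<lambda>(i,j). c i j)"
  define A :: "complex mat" where "A = map_mat of_int Ai"
  define v :: "complex vec" where "v = vec n (\<lambda>i. gs ! i)"
  have Ai: "Ai \<in> carrier_mat n n" unfolding Ai_def by auto
  have A: "A \<in> carrier_mat n n" unfolding A_def using Ai by auto
  have "eigenvector A v x" unfolding eigenvector_def
  proof (intro conjI)
    show "v \<in> carrier_vec (dim_row A)" using A v_def by auto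
    show "v \<noteq> 0\<^sub>v (dim_row A)" using nz A unfolding v_def n_def
      by (metis dim_vec index_vec index_zero_vec(1) vec_eq_iff carrier_matD(1))
    show "A *\<^sub>v v = x \<cdot>\<^sub>v v"
    proof (rule eq_vecI)
      fix i assume "i < dim_vec (x \<cdot>\<^sub>v v)"
      hence i: "i < n" by (simp add: v_def)
      have "(A *\<^sub>v v) $ i = (\<Sum>j<n. of_int (c i j) * gs ! j)"
        using i A unfolding A_def Ai_def v_def
        by (auto simp: mult_mat_vec_def scalar_prod_def lessThan_atLeast0 intro!: sum.cong)
      also have "\<dots> = x * gs ! i" using rel[of i] i n_def by simp
      finally show "(A *\<^sub>v v) $ i = (x \<cdot>\<^sub>v v) $ i" using i by (simp add: v_def)
    qed (use A v_def in auto)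
  qed
  hence "eigenvalue A x" unfolding eigenvalue_def by blast
  hence "poly (char_poly A) x = 0" using eigenvalue_root_char_poly[OF A] by simp
  moreover have "char_poly A = map_poly of_int (char_poly Ai)"
    unfolding A_def by (rule of_int_hom.char_poly_hom[OF Ai])
  moreover have "lead_coeff (char_poly Ai) = 1" using degree_monic_char_poly[OF Ai] by simp
  ultimately show ?thesis unfolding algebraic_int_altdef_ipoly by auto
qed

lemma zspan_iff: "a \<in> zspan G \<longleftrightarrow> (\<exists>c. a = (\<Sum>g\<in>G. of_int (c g) * g))"
  unfolding zspan_def by auto

lemma zspan_0: "0 \<in> zspan G"
  unfolding zspan_iff by (rule exI[of _ "\<lambda>_. 0"]) simp

lemma zspan_add: "a \<in> zspan G \<Longrightarrow> b \<in> zspan G \<Longrightarrow> a + b \<in> zspan G"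
  unfolding zspan_iff
  apply clarify
  subgoal for c d by (rule exI[of _ "\<lambda>g. c g + d g"], auto simp: sum.distrib distrib_right)
  done

lemma zspan_smult: "a \<in> zspan G \<Longrightarrow> of_int k * a \<in> zspan G"
  unfolding zspan_iff
  apply clarify
  subgoal for c by (rule exI[of _ "\<lambda>g. k * c g"], auto simp: sum_distrib_left mult.assoc)
  done

lemma zspan_neg: "a \<in> zspan G \<Longrightarrow> - a \<in> zspan G"
  using zspan_smult[of a G "-1"] by simp

lemma zspan_gen: "finite G \<Longrightarrow> g \<in> G \<Longrightarrow> g \<in> zspan G"
  unfolding zspan_iff
proof (rule exI[of _ "\<lambda>h. if h = g then 1 else 0"])
  assume "finite G" "g \<in> G"
  have "(\<Sum>h\<in>G. of_int (if h = g then 1 else 0) * h) = (\<Sum>h\<in>G. if h = g then h else 0)"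
    by (rule sum.cong) auto
  also have "\<dots> = g" using \<open>finite G\<close> \<open>g \<in> G\<close> by (simp add: sum.delta)
  finally show "g = (\<Sum>h\<in>G. of_int (if h = g then 1 else 0) * h)" by simp
qed

lemma zspan_sum: "finite I \<Longrightarrow> (\<And>i. i \<in> I \<Longrightarrow> f i \<in> zspan G) \<Longrightarrow> sum f I \<in> zspan G"
  by (induction I rule: finite_induct) (auto intro: zspan_0 zspan_add)

lemma zspan_mono_mult:
  assumes "finite A" "finite B" "a \<in> zspan A" "b \<in> zspan B"
    and C: "\<And>u v. u \<in> A \<Longrightarrow> v \<in> B \<Longrightarrow> u * v \<in> zspan C"
  shows "a * b \<in> zspan C"
proof -
  obtain c where a: "a = (\<Sum>u\<in>A. of_int (c u) * u)" using assms(3) unfolding zspan_iff by auto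
  obtain d where b: "b = (\<Sum>v\<in>B. of_int (d v) * v)" using assms(4) unfolding zspan_iff by auto
  have "a * b = (\<Sum>u\<in>A. \<Sum>v\<in>B. of_int (c u * d v) * (u * v))"
    unfolding a b sum_product by (auto intro!: sum.cong simp: algebra_simps)
  also have "\<dots> \<in> zspan C"
    using assms(1,2) C by (intro zspan_sum zspan_smult) auto
  finally show ?thesis .
qed

lemma crit:
  assumes fin: "finite G" and nz: "\<exists>g\<in>G. g \<noteq> 0" and cl: "\<And>g. g \<in> G \<Longrightarrow> x * g \<in> zspan G"
  shows "algebraic_int x"
proof -
  obtain gs where gs: "set gs = G" "distinct gs" using finite_distinct_list[OF fin] by blast
  have sumG: "(\<Sum>g\<in>G. f g) = (\<Sum>j<length gs. f (gs ! j))" for f :: "complex \<Rightarrow> complex"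
  proof -
    have "bij_betw (\<lambda>j. gs ! j) {..<length gs} G"
      using gs by (auto simp: bij_betw_def inj_on_nth in_set_conv_nth)
    thus ?thesis by (simp add: sum.reindex_bij_betw)
  qed
  have "\<forall>i. \<exists>c. i < length gs \<longrightarrow> x * gs ! i = (\<Sum>g\<in>G. of_int (c g) * g)"
  proof
    fix i show "\<exists>c. i < length gs \<longrightarrow> x * gs ! i = (\<Sum>g\<in>G. of_int (c g) * g)"
    proof (cases "i < length gs")
      case True
      hence "gs ! i \<in> G" using gs by auto
      from cl[OF this] show ?thesis unfolding zspan_iff by auto
    qed auto
  qed
  then obtain c where c: "\<And>i. i < length gs \<Longrightarrow> x * gs ! i = (\<Sum>g\<in>G. of_int (c i g) * g)"
    by metis
  show ?thesis
  proof (rule crit_list[of gs x "\<lambda>i j. c i (gs ! j)"])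
    show "\<exists>i<length gs. gs ! i \<noteq> 0" using nz gs by (auto simp: in_set_conv_nth)
    fix i assume "i < length gs"
    thus "x * gs ! i = (\<Sum>j<length gs. of_int (c i (gs ! j)) * gs ! j)"
      using c sumG by simp
  qed
qed

lemma powers_in_zspan:
  fixes y :: complex and p :: "int poly"
  assumes root: "poly (map_poly of_int p) y = 0" and monic: "lead_coeff p = 1"
  shows "y ^ k \<in> zspan ((\<lambda>i. y ^ i) ` {..<degree p})"
proof -
  define n where "n = degree p"
  define G where "G = (\<lambda>i. y ^ i) ` {..<n}"
  have fin: "finite G" unfolding G_def by auto
  have "0 = (\<Sum>i\<le>n. of_int (coeff p i) * y ^ i)"
    using root by (simp add: poly_altdef n_def coeff_map_poly degree_map_poly)
  also have "\<dots> = (\<Sum>i<n. of_int (coeff p i) * y ^ i) + y ^ n"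
    using monic by (simp add: n_def lessThan_Suc_atMost[symmetric])
  finally have yn: "y ^ n = - (\<Sum>i<n. of_int (coeff p i) * y ^ i)" by (simp add: eq_neg_iff_add_eq_0 add.commute)
  have ynz: "y ^ n \<in> zspan G"
    unfolding yn by (intro zspan_neg zspan_sum zspan_smult zspan_gen fin) (auto simp: G_def)
  have step: "y * g \<in> zspan G" if "g \<in> G" for g
  proof -
    from that obtain i where i: "i < n" "g = y ^ i" unfolding G_def by auto
    show ?thesis
    proof (cases "Suc i < n")
      case True
      hence "y * g \<in> G" using i unfolding G_def by (auto simp: image_iff intro!: bexI[of _ "Suc i"])
      thus ?thesis by (rule zspan_gen[OF fin])
    next
      case False hence "Suc i = n" using i by simp
      thus ?thesis using i ynz by auto
    qed
  qed
  have mulc: "y * a \<in> zspan G" if ha: "a \<in> zspan G" for a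
  proof -
    obtain c where a: "a = (\<Sum>g\<in>G. of_int (c g) * g)" using ha unfolding zspan_iff by auto
    have "y * a = (\<Sum>g\<in>G. of_int (c g) * (y * g))" unfolding a by (simp add: sum_distrib_left algebra_simps)
    also have "\<dots> \<in> zspan G" using fin step by (auto intro!: zspan_sum zspan_smult)
    finally show ?thesis .
  qed
  have "n > 0"
  proof (rule ccontr)
    assume "\<not> n > 0"
    hence "p = 1" using monic n_def by (metis gr0I monic_degree_0)
    thus False using root by simp
  qed
  have "y ^ k \<in> zspan G"
  proof (induction k)
    case 0
    have "y ^ 0 \<in> G" using \<open>n > 0\<close> unfolding G_def by blast
    thus ?case by (rule zspan_gen[OF fin])
  next
    case (Suc k) thus ?case using mulc by simp
  qed
  thus ?thesis unfolding G_def n_def .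
qed

lemma algebraic_int_plus_times:
  fixes y z :: complex
  assumes "algebraic_int y" "algebraic_int z"
  shows "algebraic_int (y + z) \<and> algebraic_int (y * z)"
proof -
  obtain p where p: "poly (map_poly of_int p) y = 0" "lead_coeff p = 1"
    using assms(1) unfolding algebraic_int_altdef_ipoly by blast
  obtain q where q: "poly (map_poly of_int q) z = 0" "lead_coeff q = 1"
    using assms(2) unfolding algebraic_int_altdef_ipoly by blast
  define Gy where "Gy = (\<lambda>i. y ^ i) ` {..<degree p}"
  define Gz where "Gz = (\<lambda>i. z ^ i) ` {..<degree q}"
  define G where "G = (\<lambda>(u,v). u * v) ` (Gy \<times> Gz)"
  have finGy: "finite Gy" and finGz: "finite Gz" unfolding Gy_def Gz_def by auto
  have fin: "finite G" unfolding G_def using finGy finGz by auto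
  have pw: "y ^ a * z ^ b \<in> zspan G" for a b
  proof (rule zspan_mono_mult[OF finGy finGz])
    show "y ^ a \<in> zspan Gy" unfolding Gy_def by (rule powers_in_zspan[OF p])
    show "z ^ b \<in> zspan Gz" unfolding Gz_def by (rule powers_in_zspan[OF q])
    fix u v assume "u \<in> Gy" "v \<in> Gz"
    hence "u * v \<in> G" unfolding G_def by force
    thus "u * v \<in> zspan G" by (rule zspan_gen[OF fin])
  qed
  have nz: "\<exists>g\<in>G. g \<noteq> 0"
  proof (rule ccontr)
    assume "\<not> ?thesis"
    hence z: "\<forall>g\<in>G. g = 0" by blast
    obtain c where "y ^ 0 * z ^ 0 = (\<Sum>g\<in>G. of_int (c g) * g)" using pw[of 0 0] unfolding zspan_iff by blast
    also have "\<dots> = 0" using z by (intro sum.neutral) auto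
    finally show False by simp
  qed
  have gform: "\<exists>i j. g = y ^ i * z ^ j" if "g \<in> G" for g
    using that unfolding G_def Gy_def Gz_def by auto
  have "algebraic_int (y + z)"
  proof (rule crit[OF fin nz])
    fix g assume "g \<in> G"
    then obtain i j where g: "g = y ^ i * z ^ j" using gform by blast
    have "(y + z) * g = y ^ Suc i * z ^ j + y ^ i * z ^ Suc j" unfolding g by (simp add: algebra_simps)
    thus "(y + z) * g \<in> zspan G" using zspan_add[OF pw pw] by metis
  qed
  moreover have "algebraic_int (y * z)"
  proof (rule crit[OF fin nz])
    fix g assume "g \<in> G"
    then obtain i j where g: "g = y ^ i * z ^ j" using gform by blast
    have "(y * z) * g = y ^ Suc i * z ^ Suc j" unfolding g by (simp add: algebra_simps)
    thus "(y * z) * g \<in> zspan G" using pw by metis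
  qed
  ultimately show ?thesis ..
qed


lemma R_closed:
  assumes "number_field K" "cnj ` K \<subseteq> K" "x \<in> ring_of_integers K" "y \<in> ring_of_integers K"
  shows "x + y \<in> ring_of_integers K" "x * y \<in> ring_of_integers K" "cnj x \<in> ring_of_integers K"
proof -
  have sf: "subfield_of_complex K" using assms(1) unfolding number_field_def by blast
  have xK: "x \<in> K" "algebraic_int x" and yK: "y \<in> K" "algebraic_int y"
    using assms(3,4) unfolding ring_of_integers_def by auto
  show "x + y \<in> ring_of_integers K" "x * y \<in> ring_of_integers K"
    using sf xK yK algebraic_int_plus_times[of x y] unfolding ring_of_integers_def subfield_of_complex_def by auto
  show "cnj x \<in> ring_of_integers K" using assms(2) xK unfolding ring_of_integers_def by auto
qed

lemma R_01:
  assumes "number_field K"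
  shows "0 \<in> ring_of_integers K" "1 \<in> ring_of_integers K"
  using assms unfolding number_field_def subfield_of_complex_def ring_of_integers_def by auto

theorem mainTheorem3:
  fixes K :: "complex set" and a b \<alpha> \<beta> :: complex
  assumes "number_field K"
    and "class_number_one K"
    and "cnj ` K \<subseteq> K"
    and "a \<in> ring_of_integers K \<inter> \<real>" and "b \<in> ring_of_integers K \<inter> \<real>"
    and "dvd_in (ring_of_integers K \<inter> \<real>) a b"
    and "\<alpha> \<in> ring_of_integers K" and "\<beta> \<in> ring_of_integers K"
    and "a = \<alpha> * cnj \<alpha>" and "b = \<beta> * cnj \<beta>"
  shows "\<exists>\<alpha>1 \<in> ring_of_integers K. dvd_in (ring_of_integers K) \<alpha>1 \<beta> \<and>
           \<alpha>1 * cnj \<alpha>1 = \<alpha> * cnj \<alpha> \<and>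
           \<beta> / \<alpha>1 \<in> ring_of_integers K \<and> b / a = (\<beta> / \<alpha>1) * cnj (\<beta> / \<alpha>1)"
proof -
  let ?R = "ring_of_integers K"
  note add = R_closed(1)[OF assms(1,3)] and mul = R_closed(2)[OF assms(1,3)]
    and cj = R_closed(3)[OF assms(1,3)]
  note R0 = R_01(1)[OF assms(1)] and R1 = R_01(2)[OF assms(1)]
  obtain c where c: "c \<in> ?R" "b = a * c" using assms(6) unfolding dvd_in_def by auto
  show ?thesis
  proof (cases "\<alpha> = 0")
    case True
    hence "a = 0" using assms(9) by simp
    hence "b = 0" using c by simp
    hence "\<beta> = 0" using assms(10) by simp
    show ?thesis
      by (rule bexI[of _ 0]) (use R0 \<open>\<beta> = 0\<close> True \<open>a = 0\<close> \<open>b = 0\<close> in \<open>auto simp: dvd_in_def\<close>)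
  next
    case False
    define I where "I = {x * \<alpha> + y * \<beta> | x y. x \<in> ?R \<and> y \<in> ?R}"
    have "ideal_in ?R I" unfolding ideal_in_def
    proof (intro conjI ballI)
      show "I \<subseteq> ?R" unfolding I_def using assms(7,8) add mul by auto
      show "0 \<in> I" unfolding I_def using R0 by force
      fix x y assume "x \<in> I" "y \<in> I"
      then obtain x1 x2 y1 y2 where "x = x1 * \<alpha> + x2 * \<beta>" "y = y1 * \<alpha> + y2 * \<beta>"
        "x1 \<in> ?R" "x2 \<in> ?R" "y1 \<in> ?R" "y2 \<in> ?R" unfolding I_def by auto
      hence "x + y = (x1 + y1) * \<alpha> + (x2 + y2) * \<beta>" "x1 + y1 \<in> ?R" "x2 + y2 \<in> ?R"
        using add by (auto simp: algebra_simps)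
      thus "x + y \<in> I" unfolding I_def by blast
    next
      fix r x assume "r \<in> ?R" "x \<in> I"
      then obtain x1 x2 where "x = x1 * \<alpha> + x2 * \<beta>" "x1 \<in> ?R" "x2 \<in> ?R" unfolding I_def by auto
      hence "r * x = (r * x1) * \<alpha> + (r * x2) * \<beta>" "r * x1 \<in> ?R" "r * x2 \<in> ?R"
        using mul \<open>r \<in> ?R\<close> by (auto simp: algebra_simps)
      thus "r * x \<in> I" unfolding I_def by blast
    qed
    then obtain g where g: "g \<in> ?R" "I = {g * r | r. r \<in> ?R}"
      using assms(2) unfolding class_number_one_def by blast
    have "\<alpha> \<in> I" unfolding I_def using R0 R1 by force
    then obtain r1 where r1: "r1 \<in> ?R" "\<alpha> = g * r1" using g by auto
    have "\<beta> \<in> I" unfolding I_def using R0 R1 by force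
    then obtain r2 where r2: "r2 \<in> ?R" "\<beta> = g * r2" using g by auto
    have "g \<in> I" using g R1 by force
    then obtain x y where xy: "x \<in> ?R" "y \<in> ?R" "g = x * \<alpha> + y * \<beta>" unfolding I_def by auto
    have g0: "g \<noteq> 0" "r1 \<noteq> 0" using False r1 by auto
    have "g * 1 = g * (x * r1 + y * r2)" using xy(3) r1 r2 by (simp add: algebra_simps)
    hence bez: "x * r1 + y * r2 = 1" using g0 by simp
    have "g * cnj g * (r2 * cnj r2) = g * cnj g * (r1 * cnj r1 * c)"
      using c(2) assms(9,10) r1 r2 by (simp add: algebra_simps)
    hence rr: "r2 * cnj r2 = r1 * cnj r1 * c" using g0 by simp
    define \<delta> where "\<delta> = x * cnj r2 + y * cnj r1 * c"
    have \<delta>R: "\<delta> \<in> ?R" unfolding \<delta>_def using xy r1 r2 c add mul cj by auto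
    have "cnj r2 = cnj r2 * (x * r1 + y * r2)" using bez by simp
    also have "\<dots> = x * r1 * cnj r2 + y * (r2 * cnj r2)" by (simp add: algebra_simps)
    also have "\<dots> = r1 * \<delta>" unfolding rr \<delta>_def by (simp add: algebra_simps)
    finally have cr2: "cnj r2 = r1 * \<delta>" .
    define \<alpha>1 where "\<alpha>1 = g * cnj r1"
    have a1R: "\<alpha>1 \<in> ?R" unfolding \<alpha>1_def using g r1 mul cj by auto
    have a10: "\<alpha>1 \<noteq> 0" using g0 unfolding \<alpha>1_def by simp
    have "\<beta> = g * cnj (cnj r2)" using r2 by simp
    also have "\<dots> = \<alpha>1 * cnj \<delta>" unfolding cr2 \<alpha>1_def by simp
    finally have bd: "\<beta> = \<alpha>1 * cnj \<delta>" .
    have aa: "\<alpha>1 * cnj \<alpha>1 = \<alpha> * cnj \<alpha>" unfolding \<alpha>1_def r1(2) by (simp add: algebra_simps)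
    have q: "\<beta> / \<alpha>1 = cnj \<delta>" using bd a10 by simp
    show ?thesis
    proof (rule bexI[OF _ a1R], intro conjI)
      show "dvd_in ?R \<alpha>1 \<beta>" unfolding dvd_in_def using bd cj[OF \<delta>R \<delta>R] by blast
      show "\<alpha>1 * cnj \<alpha>1 = \<alpha> * cnj \<alpha>" by (rule aa)
      show "\<beta> / \<alpha>1 \<in> ?R" unfolding q using cj[OF \<delta>R \<delta>R] .
      have "b / a = (\<beta> * cnj \<beta>) / (\<alpha>1 * cnj \<alpha>1)" using assms(9,10) aa by simp
      also have "\<dots> = (\<beta> / \<alpha>1) * cnj (\<beta> / \<alpha>1)" by (simp add: field_simps)
      finally show "b / a = (\<beta> / \<alpha>1) * cnj (\<beta> / \<alpha>1)" .
    qed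
  qed
qed

end
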